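(* Let $\mathcal{Z}$ be a data space with unknown distribution $\mu$, let $S=(Z_1,\dots,Z_n)$ have i.i.d. entries $Z_i\sim\mu$, let the learning algorithm be a Markov kernel $P_{W|S}$ producing a hypothesis $W$ in a hypothesis class $\mathcal{W}$, with $P_W$ the marginal of $W$ and $P_{W,Z_i}$ the joint law of $(W,Z_i)$. Let $l:\mathcal{W}\times\mathcal{Z}\to\mathbb{R}^+$ be a loss function and assume that for every $i=1,\dots,n$, $l(W,Z_i)$ is $\sigma$-subgaussian when $(W,Z_i)$ is distributed according to $\frac{P_{W,Z_i}+P_W\otimes\mu}{2}$. Then $$|\overline{\text{gen}}(P_{W|S},\mu)|\le 2\sigma\sqrt{2\log 2}.$$
   Context: A random variable $X$ is $\sigma$-subgaussian if $\mathbb{E}[e^{\lambda(X-\mathbb{E}X)}]\le e^{\lambda^2\sigma^2/2}$ for all $\lambda\in\mathbb{R}$. Expected generalization error: $\overline{\text{gen}}(P_{W|S},\mu)=\mathbb{E}_{P_{W,S}}\big[\int l(W,z)\,\mu(dz)-\frac1n\sum_{i=1}^n l(W,Z_i)\big]$. $\log$ is the natural logarithm. *)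

theory Defs
  imports "HOL-Probability.Probability"
begin

definition subgaussian :: "'a measure \<Rightarrow> ('a \<Rightarrow> real) \<Rightarrow> real \<Rightarrow> bool" where
  "subgaussian N X \<sigma> \<longleftrightarrow>
     integrable N X \<and>
     (\<forall>t::real. integrable N (\<lambda>x. exp (t * (X x - (\<integral>y. X y \<partial>N))))
        \<and> (\<integral>x. exp (t * (X x - (\<integral>y. X y \<partial>N))) \<partial>N) \<le> exp (t\<^sup>2 * \<sigma>\<^sup>2 / 2))"

definition mixture :: "'a measure \<Rightarrow> 'a measure \<Rightarrow> 'a measure" where
  "mixture N1 N2 = measure_pmf (bernoulli_pmf (1/2)) \<bind> (\<lambda>b. if b then N1 else N2)"

definition sample_dist :: "nat \<Rightarrow> 'z measure \<Rightarrow> (nat \<Rightarrow> 'z) measure" where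
  "sample_dist n \<mu> = PiM {..<n} (\<lambda>_. \<mu>)"

definition joint_WS :: "nat \<Rightarrow> 'z measure \<Rightarrow> 'w measure \<Rightarrow> ((nat \<Rightarrow> 'z) \<Rightarrow> 'w measure)
    \<Rightarrow> ('w \<times> (nat \<Rightarrow> 'z)) measure" where
  "joint_WS n \<mu> Wm K = sample_dist n \<mu> \<bind>
      (\<lambda>s. distr (K s) (Wm \<Otimes>\<^sub>M sample_dist n \<mu>) (\<lambda>w. (w, s)))"

definition marg_W :: "nat \<Rightarrow> 'z measure \<Rightarrow> 'w measure \<Rightarrow> ((nat \<Rightarrow> 'z) \<Rightarrow> 'w measure) \<Rightarrow> 'w measure" where
  "marg_W n \<mu> Wm K = distr (joint_WS n \<mu> Wm K) Wm fst"

definition joint_WZ :: "nat \<Rightarrow> 'z measure \<Rightarrow> 'w measure \<Rightarrow> ((nat \<Rightarrow> 'z) \<Rightarrow> 'w measure) \<Rightarrow> nat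
    \<Rightarrow> ('w \<times> 'z) measure" where
  "joint_WZ n \<mu> Wm K i = distr (joint_WS n \<mu> Wm K) (Wm \<Otimes>\<^sub>M \<mu>) (\<lambda>(w, s). (w, s i))"

definition gen_err :: "nat \<Rightarrow> 'z measure \<Rightarrow> 'w measure \<Rightarrow> ((nat \<Rightarrow> 'z) \<Rightarrow> 'w measure)
    \<Rightarrow> ('w \<Rightarrow> 'z \<Rightarrow> real) \<Rightarrow> real" where
  "gen_err n \<mu> Wm K l = (\<integral>(w, s). ((\<integral>z. l w z \<partial>\<mu>) - (1 / real n) * (\<Sum>i<n. l w (s i)))
      \<partial>joint_WS n \<mu> Wm K)"

end

theory Submission
  imports Defs
begin

lemma mixture_props:
  assumes P: "prob_space P" and R: "prob_space R" and sR: "sets R = sets P"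
  shows "sets (mixture P R) = sets P"
    and "\<And>g. g \<in> borel_measurable P \<Longrightarrow> (\<integral>\<^sup>+x. g x \<partial>mixture P R) = ((\<integral>\<^sup>+x. g x \<partial>P) + (\<integral>\<^sup>+x. g x \<partial>R)) / 2"
proof -
  have N: "(\<lambda>b. if b then P else R) \<in> measure_pmf (bernoulli_pmf (1/2)) \<rightarrow>\<^sub>M subprob_algebra P"
    using P R sR by (auto simp: space_subprob_algebra prob_space_imp_subprob_space)
  show "sets (mixture P R) = sets P"
    unfolding mixture_def by (rule sets_bind) (use sR in auto)
  fix g :: "_ \<Rightarrow> ennreal" assume g: "g \<in> borel_measurable P"
  show "(\<integral>\<^sup>+x. g x \<partial>mixture P R) = ((\<integral>\<^sup>+x. g x \<partial>P) + (\<integral>\<^sup>+x. g x \<partial>R)) / 2"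
    unfolding mixture_def nn_integral_bind[OF g N]
    by (simp add: divide_ennreal_def algebra_simps) 
qed

lemma two_half: "2 * (c / 2) = (c::ennreal)"
proof -
  have "2 * (c / 2) = c * (2 / 2)" by (metis ennreal_divide_times mult.commute)
  also have "(2::ennreal) / 2 = 1" by (rule ennreal_divide_self) auto
  finally show ?thesis by simp
qed

lemma real_key:
  fixes a s :: real
  assumes s: "s \<ge> 0" and L: "L > 0" and H: "\<And>t. t * a \<le> L + t\<^sup>2 * s\<^sup>2 / 2"
  shows "\<bar>a\<bar> \<le> s * sqrt (2 * L)"
proof (cases "s = 0")
  case True
  show ?thesis
  proof (rule ccontr)
    assume "\<not> ?thesis"
    hence "a \<noteq> 0" using True by simp
    have "(2 * L / a) * a \<le> L" using H[of "2 * L / a"] True by simp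
    thus False using \<open>a \<noteq> 0\<close> L by simp
  qed
next
  case False
  hence sp: "s > 0" using s by simp
  define r where "r = sqrt (2 * L)"
  have r: "r > 0" "r\<^sup>2 = 2 * L" using L by (auto simp: r_def)
  have h1: "(sgn a * r / s) * a \<le> L + (sgn a * r / s)\<^sup>2 * s\<^sup>2 / 2" by (rule H)
  have e2: "(sgn a * r / s)\<^sup>2 * s\<^sup>2 / 2 = (if a = 0 then 0 else L)"
    using sp r by (auto simp: power_mult_distrib power_divide sgn_if)
  have e1: "(sgn a * r / s) * a = \<bar>a\<bar> * r / s" by (auto simp: sgn_if)
  have "\<bar>a\<bar> * r / s \<le> L + (if a = 0 then 0 else L)" using h1 unfolding e1 e2 .
  hence "\<bar>a\<bar> * r / s \<le> 2 * L" using L by (auto split: if_splits)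
  hence "\<bar>a\<bar> * r \<le> 2 * L * s" using sp by (simp add: divide_le_eq)
  hence "\<bar>a\<bar> * r \<le> r\<^sup>2 * s" using r by simp
  hence "\<bar>a\<bar> \<le> r * s" using r by (simp add: power2_eq_square mult.assoc)
  thus ?thesis by (simp add: r_def mult.commute)
qed

lemma dom_integrable:
  assumes sPQ: "sets P = sets Q"
    and dom: "\<And>g. g \<in> borel_measurable Q \<Longrightarrow> (\<integral>\<^sup>+x. g x \<partial>P) \<le> 2 * (\<integral>\<^sup>+x. g x \<partial>Q)"
    and h: "integrable Q (h :: _ \<Rightarrow> real)"
  shows "integrable P h"
proof -
  have hm: "h \<in> borel_measurable Q" using h by auto
  have "(\<integral>\<^sup>+x. ennreal (norm (h x)) \<partial>P) \<le> 2 * (\<integral>\<^sup>+x. ennreal (norm (h x)) \<partial>Q)"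
    by (rule dom) (use hm in measurable)
  also have "\<dots> < \<infinity>" using h by (simp add: integrable_iff_bounded ennreal_mult_less_top)
  finally have fin: "(\<integral>\<^sup>+x. ennreal (norm (h x)) \<partial>P) < \<infinity>" .
  have "h \<in> borel_measurable P" by (subst measurable_cong_sets[OF sPQ refl]) (rule hm)
  thus ?thesis using fin by (simp add: integrable_iff_bounded)
qed

lemma dom_integral:
  assumes sPQ: "sets P = sets Q"
    and dom: "\<And>g. g \<in> borel_measurable Q \<Longrightarrow> (\<integral>\<^sup>+x. g x \<partial>P) \<le> 2 * (\<integral>\<^sup>+x. g x \<partial>Q)"
    and h: "integrable Q (h :: _ \<Rightarrow> real)" and hp: "\<And>x. h x \<ge> 0"
  shows "(\<integral>x. h x \<partial>P) \<le> 2 * (\<integral>x. h x \<partial>Q)"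
proof -
  have hP: "integrable P h" by (rule dom_integrable[OF sPQ dom h])
  have hm: "h \<in> borel_measurable Q" using h by auto
  have "ennreal (\<integral>x. h x \<partial>P) = (\<integral>\<^sup>+x. ennreal (h x) \<partial>P)"
    using hP hp by (simp add: nn_integral_eq_integral)
  also have "\<dots> \<le> 2 * (\<integral>\<^sup>+x. ennreal (h x) \<partial>Q)" by (rule dom) (use hm in measurable)
  also have "\<dots> = ennreal (2 * (\<integral>x. h x \<partial>Q))"
    using h hp by (simp add: nn_integral_eq_integral ennreal_mult)
  finally show ?thesis using hp h by (simp add: ennreal_le_iff integral_nonneg_AE)
qed

lemma core:
  assumes P: "prob_space P" and sPQ: "sets P = sets Q"
    and dom: "\<And>g. g \<in> borel_measurable Q \<Longrightarrow> (\<integral>\<^sup>+x. g x \<partial>P) \<le> 2 * (\<integral>\<^sup>+x. g x \<partial>Q)"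
    and sg: "subgaussian Q f \<sigma>" and s: "\<sigma> \<ge> 0"
  shows "\<bar>(\<integral>x. f x \<partial>P) - (\<integral>x. f x \<partial>Q)\<bar> \<le> \<sigma> * sqrt (2 * ln 2)"
proof -
  interpret P: prob_space P by (rule P)
  define m where "m = (\<integral>x. f x \<partial>Q)"
  define a where "a = (\<integral>x. f x \<partial>P) - m"
  have fQ: "integrable Q f" using sg by (simp add: subgaussian_def)
  have fP: "integrable P f" by (rule dom_integrable[OF sPQ dom fQ])
  have "t * a \<le> ln 2 + t\<^sup>2 * \<sigma>\<^sup>2 / 2" for t
  proof -
    define h where "h = (\<lambda>x. exp (t * (f x - m)))"
    have hQ: "integrable Q h" and hb: "(\<integral>x. h x \<partial>Q) \<le> exp (t\<^sup>2 * \<sigma>\<^sup>2 / 2)"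
      using sg by (auto simp: subgaussian_def h_def m_def)
    have hnn: "\<And>x. h x \<ge> 0" unfolding h_def by simp
    have hP: "integrable P h" by (rule dom_integrable[OF sPQ dom hQ])
    have "(\<integral>x. h x \<partial>P) \<le> 2 * (\<integral>x. h x \<partial>Q)"
      by (rule dom_integral[OF sPQ dom hQ hnn])
    also have "\<dots> \<le> 2 * exp (t\<^sup>2 * \<sigma>\<^sup>2 / 2)" using hb by simp
    finally have up: "(\<integral>x. h x \<partial>P) \<le> 2 * exp (t\<^sup>2 * \<sigma>\<^sup>2 / 2)" .
    have pw: "exp (t * a) * (1 + t * (f x - m) - t * a) \<le> h x" for x
    proof -
      have "1 + (t * (f x - m) - t * a) \<le> exp (t * (f x - m) - t * a)" by (rule exp_ge_add_one_self)
      hence "exp (t * a) * (1 + (t * (f x - m) - t * a)) \<le> exp (t * a) * exp (t * (f x - m) - t * a)"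
        by (simp add: mult_left_mono)
      moreover have "exp (t * a) * exp (t * (f x - m) - t * a) = h x"
        unfolding h_def by (simp add: mult_exp_exp)
      ultimately show ?thesis by (simp add: algebra_simps)
    qed
    have intl: "integrable P (\<lambda>x. exp (t * a) * (1 + t * (f x - m) - t * a))"
      using fP by (intro integrable_mult_right Bochner_Integration.integrable_diff
          Bochner_Integration.integrable_add integrable_mult_right) auto
    have "(\<integral>x. exp (t * a) * (1 + t * (f x - m) - t * a) \<partial>P) = exp (t * a) * (1 + t * ((\<integral>x. f x \<partial>P) - m) - t * a)"
    proof -
      have "(\<integral>x. (1 + t * (f x - m) - t * a) \<partial>P) = 1 + t * ((\<integral>x. f x \<partial>P) - m) - t * a"
      proof -
        have "(\<lambda>x. 1 + t * (f x - m) - t * a) = (\<lambda>x. t * f x + (1 - t * m - t * a))"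
          by (auto simp: algebra_simps)
        hence "(\<integral>x. (1 + t * (f x - m) - t * a) \<partial>P) = (\<integral>x. (t * f x + (1 - t * m - t * a)) \<partial>P)" by simp
        also have "\<dots> = t * (\<integral>x. f x \<partial>P) + (1 - t * m - t * a)"
          using fP by (simp add: Bochner_Integration.integral_add P.prob_space)
        finally show ?thesis by (simp add: algebra_simps)
      qed
      thus ?thesis by simp
    qed
    also have "\<dots> = exp (t * a)" by (simp add: a_def)
    finally have "exp (t * a) \<le> (\<integral>x. h x \<partial>P)"
      using integral_mono[OF intl hP pw] by simp
    with up have "exp (t * a) \<le> 2 * exp (t\<^sup>2 * \<sigma>\<^sup>2 / 2)" by simp
    hence "ln (exp (t * a)) \<le> ln (2 * exp (t\<^sup>2 * \<sigma>\<^sup>2 / 2))" by (subst ln_le_cancel_iff) auto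
    thus ?thesis by (simp add: ln_mult)
  qed
  hence "\<bar>a\<bar> \<le> \<sigma> * sqrt (2 * ln 2)" by (intro real_key[OF s]) auto
  thus ?thesis by (simp add: a_def m_def)
qed

theorem proposition1:
  fixes \<mu> :: "'z measure" and Wm :: "'w measure"
    and K :: "(nat \<Rightarrow> 'z) \<Rightarrow> 'w measure"
    and l :: "'w \<Rightarrow> 'z \<Rightarrow> real" and n :: nat and \<sigma> :: real
  assumes "prob_space \<mu>"
    and "n > 0"
    and "K \<in> sample_dist n \<mu> \<rightarrow>\<^sub>M prob_algebra Wm"
    and "(\<lambda>(w, z). l w z) \<in> borel_measurable (Wm \<Otimes>\<^sub>M \<mu>)"
    and "\<And>w z. w \<in> space Wm \<Longrightarrow> z \<in> space \<mu> \<Longrightarrow> l w z \<ge> 0"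
    and "\<sigma> \<ge> 0"
    and "\<And>i. i < n \<Longrightarrow>
          subgaussian (mixture (joint_WZ n \<mu> Wm K i) (marg_W n \<mu> Wm K \<Otimes>\<^sub>M \<mu>))
                      (\<lambda>(w, z). l w z) \<sigma>"
  shows "\<bar>gen_err n \<mu> Wm K l\<bar> \<le> 2 * \<sigma> * sqrt (2 * ln 2)"
proof -
  note mu = assms(1) and npos = assms(2) and Km = assms(3) and lm = assms(4)
    and s = assms(6) and sg = assms(7)
  interpret mu: prob_space \<mu> by (rule mu)
  define S where "S = sample_dist n \<mu>"
  define J where "J = joint_WS n \<mu> Wm K"
  define PW where "PW = marg_W n \<mu> Wm K"
  define Pi where "Pi = joint_WZ n \<mu> Wm K"
  define R where "R = PW \<Otimes>\<^sub>M \<mu>"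
  define L where "L = (\<lambda>(w, z). l w z)"
  define B where "B = 2 * \<sigma> * sqrt (2 * ln 2)"
  have SP: "prob_space S" unfolding S_def sample_dist_def by (rule prob_space_PiM) (rule mu)
  have KS: "K \<in> S \<rightarrow>\<^sub>M prob_algebra Wm" using Km by (simp add: S_def)
  have Nm: "(\<lambda>s. distr (K s) (Wm \<Otimes>\<^sub>M S) (\<lambda>w. (w, s))) \<in> S \<rightarrow>\<^sub>M prob_algebra (Wm \<Otimes>\<^sub>M S)"
    by (rule measurable_distr_prob_space2[OF KS]) measurable
  have SA: "S \<in> space (prob_algebra S)" using SP by (simp add: space_prob_algebra)
  have JP: "prob_space J" unfolding J_def joint_WS_def S_def[symmetric]
    by (rule prob_space_bind'[OF SA Nm])
  have sJ: "sets J = sets (Wm \<Otimes>\<^sub>M S)" unfolding J_def joint_WS_def S_def[symmetric]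
    by (rule sets_bind'[OF SA Nm])
  interpret J: prob_space J by (rule JP)
  have fstm: "fst \<in> J \<rightarrow>\<^sub>M Wm" by (subst measurable_cong_sets[OF sJ refl]) measurable
  have PWP: "prob_space PW" unfolding PW_def marg_W_def J_def[symmetric]
    by (rule J.prob_space_distr[OF fstm])
  interpret PW: prob_space PW by (rule PWP)
  interpret R: pair_prob_space PW \<mu> by unfold_locales
  have RP: "prob_space R" unfolding R_def by unfold_locales
  have sPW: "sets PW = sets Wm" by (simp add: PW_def marg_W_def)
  have sR: "sets R = sets (Wm \<Otimes>\<^sub>M \<mu>)" unfolding R_def
    by (rule sets_pair_measure_cong[OF sPW refl])
  have LR: "L \<in> borel_measurable R" using lm by (simp add: L_def measurable_cong_sets[OF sR refl])
  have compm: "(\<lambda>(w, s). (w, s i)) \<in> J \<rightarrow>\<^sub>M (Wm \<Otimes>\<^sub>M \<mu>)" if "i < n" for i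
  proof -
    have "(\<lambda>s. s i) \<in> S \<rightarrow>\<^sub>M \<mu>" unfolding S_def sample_dist_def
      using measurable_component_singleton[of i "{..<n}" "\<lambda>_. \<mu>"] that by simp
    hence "(\<lambda>(w, s). (w, s i)) \<in> (Wm \<Otimes>\<^sub>M S) \<rightarrow>\<^sub>M (Wm \<Otimes>\<^sub>M \<mu>)" by measurable
    thus ?thesis by (subst measurable_cong_sets[OF sJ refl])
  qed
  have diff: "\<bar>(\<integral>x. L x \<partial>R) - (\<integral>x. L x \<partial>Pi i)\<bar> \<le> B"
    and intPi: "integrable (Pi i) L" and intR: "integrable R L" if i: "i < n" for i
  proof -
    have PiP: "prob_space (Pi i)" unfolding Pi_def joint_WZ_def J_def[symmetric]
      by (rule J.prob_space_distr[OF compm[OF i]])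
    have sPi: "sets (Pi i) = sets (Wm \<Otimes>\<^sub>M \<mu>)" by (simp add: Pi_def joint_WZ_def)
    define Q where "Q = mixture (Pi i) R"
    have sRPi: "sets R = sets (Pi i)" using sR sPi by simp
    note mp = mixture_props[OF PiP RP sRPi]
    have sQ: "sets Q = sets (Pi i)" using mp(1) by (simp add: Q_def)
    have sgQ: "subgaussian Q L \<sigma>" using sg[OF i] by (simp add: Q_def Pi_def R_def PW_def L_def)
    have domP: "(\<integral>\<^sup>+x. g x \<partial>Pi i) \<le> 2 * (\<integral>\<^sup>+x. g x \<partial>Q)" if g: "g \<in> borel_measurable Q" for g
    proof -
      have g': "g \<in> borel_measurable (Pi i)" using g by (simp add: measurable_cong_sets[OF sQ refl])
      show ?thesis unfolding Q_def mp(2)[OF g'] by (simp only: two_half) simp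
    qed
    have domR: "(\<integral>\<^sup>+x. g x \<partial>R) \<le> 2 * (\<integral>\<^sup>+x. g x \<partial>Q)" if g: "g \<in> borel_measurable Q" for g
    proof -
      have g': "g \<in> borel_measurable (Pi i)" using g by (simp add: measurable_cong_sets[OF sQ refl])
      show ?thesis unfolding Q_def mp(2)[OF g'] by (simp only: two_half) simp
    qed
    have c1: "\<bar>(\<integral>x. L x \<partial>Pi i) - (\<integral>x. L x \<partial>Q)\<bar> \<le> \<sigma> * sqrt (2 * ln 2)"
      by (rule core[OF PiP sQ[symmetric] domP sgQ s])
    have c2: "\<bar>(\<integral>x. L x \<partial>R) - (\<integral>x. L x \<partial>Q)\<bar> \<le> \<sigma> * sqrt (2 * ln 2)"
      by (rule core[OF RP _ domR sgQ s]) (simp add: sRPi sQ)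
    show "\<bar>(\<integral>x. L x \<partial>R) - (\<integral>x. L x \<partial>Pi i)\<bar> \<le> B" using c1 c2 by (simp add: B_def)
    have LQ: "integrable Q L" using sgQ by (simp add: subgaussian_def)
    show "integrable (Pi i) L" by (rule dom_integrable[OF sQ[symmetric] domP LQ])
    show "integrable R L" by (rule dom_integrable[OF _ domR LQ]) (simp add: sRPi sQ)
  qed
  define G where "G = (\<lambda>w. \<integral>z. l w z \<partial>\<mu>)"
  define T where "T = (\<lambda>i (x :: 'w \<times> (nat \<Rightarrow> 'z)). (fst x, snd x i))"
  have Tm: "T i \<in> J \<rightarrow>\<^sub>M (Wm \<Otimes>\<^sub>M \<mu>)" if "i < n" for i
  proof -
    have "T i = (\<lambda>(w, s). (w, s i))" by (auto simp: T_def)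
    thus ?thesis using compm[OF that] by simp
  qed
  have intR0: "integrable R L" using intR[OF npos] .
  have GL: "G = (\<lambda>x. \<integral>y. L (x, y) \<partial>\<mu>)" by (simp add: G_def L_def)
  have intG: "integrable PW G" unfolding GL R_def using R.integrable_fst'[of L] intR0 by (simp add: R_def)
  have eqG: "(\<integral>w. G w \<partial>PW) = (\<integral>x. L x \<partial>R)" unfolding GL R_def using R.integral_fst'[of L] intR0 by (simp add: R_def)
  have GmPW: "G \<in> borel_measurable PW" using intG by auto
  have Gm: "G \<in> borel_measurable Wm" using GmPW by (simp add: measurable_cong_sets[OF sPW refl])
  have PWd: "PW = distr J Wm fst" by (simp add: PW_def marg_W_def J_def)
  have intGJ: "integrable J (\<lambda>x. G (fst x))"
    using intG unfolding PWd by (simp add: integrable_distr_eq[OF fstm Gm])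
  have eqGJ: "(\<integral>x. G (fst x) \<partial>J) = (\<integral>x. L x \<partial>R)"
    using eqG unfolding PWd by (simp add: integral_distr[OF fstm Gm])
  have LmW: "L \<in> borel_measurable (Wm \<Otimes>\<^sub>M \<mu>)" using lm by (simp add: L_def)
  have Pid: "Pi i = distr J (Wm \<Otimes>\<^sub>M \<mu>) (T i)" for i
    by (simp add: Pi_def joint_WZ_def J_def T_def case_prod_beta')
  have intLJ: "integrable J (\<lambda>x. L (T i x))" if i: "i < n" for i
    using intPi[OF i] unfolding Pid by (simp add: integrable_distr_eq[OF Tm[OF i] LmW])
  have eqLJ: "(\<integral>x. L (T i x) \<partial>J) = (\<integral>x. L x \<partial>Pi i)" if i: "i < n" for i
    unfolding Pid by (simp add: integral_distr[OF Tm[OF i] LmW])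
  have fun_eq: "(\<lambda>(w, s). (\<integral>z. l w z \<partial>\<mu>) - (1 / real n) * (\<Sum>i<n. l w (s i)))
      = (\<lambda>x. G (fst x) - (1 / real n) * (\<Sum>i<n. L (T i x)))"
    by (auto simp: G_def L_def T_def)
  have "gen_err n \<mu> Wm K l = (\<integral>x. G (fst x) - (1 / real n) * (\<Sum>i<n. L (T i x)) \<partial>J)"
    unfolding gen_err_def J_def[symmetric] fun_eq ..
  also have "\<dots> = (\<integral>x. G (fst x) \<partial>J) - (1 / real n) * (\<Sum>i<n. (\<integral>x. L (T i x) \<partial>J))"
  proof -
    have intS: "integrable J (\<lambda>x. \<Sum>i<n. L (T i x))" by (rule Bochner_Integration.integrable_sum) (use intLJ in auto)
    have "(\<integral>x. G (fst x) - (1 / real n) * (\<Sum>i<n. L (T i x)) \<partial>J)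
        = (\<integral>x. G (fst x) \<partial>J) - (\<integral>x. (1 / real n) * (\<Sum>i<n. L (T i x)) \<partial>J)"
      by (rule Bochner_Integration.integral_diff[OF intGJ]) (rule integrable_mult_right[OF intS])
    also have "(\<integral>x. (1 / real n) * (\<Sum>i<n. L (T i x)) \<partial>J) = (1 / real n) * (\<integral>x. (\<Sum>i<n. L (T i x)) \<partial>J)"
      by (rule integral_mult_right_zero)
    also have "(\<integral>x. (\<Sum>i<n. L (T i x)) \<partial>J) = (\<Sum>i<n. (\<integral>x. L (T i x) \<partial>J))"
      using Bochner_Integration.integral_sum[of "{..<n}" J "\<lambda>i x. L (T i x)"] intLJ by auto
    finally show ?thesis .
  qed
  also have "\<dots> = (\<integral>x. L x \<partial>R) - (1 / real n) * (\<Sum>i<n. (\<integral>x. L x \<partial>Pi i))"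
    using eqGJ eqLJ by simp
  also have "\<dots> = (1 / real n) * (\<Sum>i<n. ((\<integral>x. L x \<partial>R) - (\<integral>x. L x \<partial>Pi i)))"
    using npos by (simp add: sum_subtractf field_simps)
  finally have ge: "gen_err n \<mu> Wm K l = (1 / real n) * (\<Sum>i<n. ((\<integral>x. L x \<partial>R) - (\<integral>x. L x \<partial>Pi i)))" .
  have "\<bar>\<Sum>i<n. ((\<integral>x. L x \<partial>R) - (\<integral>x. L x \<partial>Pi i))\<bar> \<le> (\<Sum>i<n. \<bar>(\<integral>x. L x \<partial>R) - (\<integral>x. L x \<partial>Pi i)\<bar>)"
    by (rule sum_abs)
  also have "\<dots> \<le> (\<Sum>i<n. B)" by (rule sum_mono) (use diff in auto)
  also have "\<dots> = real n * B" by simp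
  finally have "\<bar>gen_err n \<mu> Wm K l\<bar> \<le> (1 / real n) * (real n * B)"
    unfolding ge using npos by (simp add: abs_mult divide_le_eq mult.commute)
  thus ?thesis using npos by (simp add: B_def)
qed

end
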